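(* Let $J$ be any nonempty real interval, possibly unbounded. A function $f\colon J^n\to\mathbb{R}$ is comonotonically modular if and only if it is comonotonically separable, that is, for every $\sigma\in S_n$ there exist functions $f^\sigma_i\colon J\to\mathbb{R}$, $i\in[n]$, such that $$f(\mathbf{x})=\sum_{i=1}^n f^\sigma_i(x_{\sigma(i)})\qquad\text{for all }\mathbf{x}\in J^n\cap\mathbb{R}^n_\sigma.$$
   Context: Notation: $[n]=\{1,\ldots,n\}$; $S_n$ is the set of permutations of $[n]$; for $\sigma\in S_n$, $\mathbb{R}^n_\sigma=\{\mathbf{x}\in\mathbb{R}^n: x_{\sigma(1)}\leq\cdots\leq x_{\sigma(n)}\}$. Two tuples $\mathbf{x},\mathbf{x}'\in J^n$ are comonotonic if both lie in $J^n\cap\mathbb{R}^n_\sigma$ for some $\sigma\in S_n$. A function $f\colon J^n\to\mathbb{R}$ is comonotonically modular if $f(\mathbf{x})+f(\mathbf{x}')=f(\mathbf{x}\wedge\mathbf{x}')+f(\mathbf{x}\vee\mathbf{x}')$ for all comonotonic $\mathbf{x},\mathbf{x}'\in J^n$, where $\wedge,\vee$ are componentwise min and max. *)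

theory Defs
  imports "HOL-Analysis.Analysis" "HOL-Combinatorics.Permutations"
begin

text \<open>Tuples in J^n are modelled as functions nat \<Rightarrow> real indexed by 1..n,
  extensional (value 0 outside {1..n}).\<close>

definition tuples :: "real set \<Rightarrow> nat \<Rightarrow> (nat \<Rightarrow> real) set" where
  "tuples J n = {x. (\<forall>i\<in>{1..n}. x i \<in> J) \<and> (\<forall>i. i \<notin> {1..n} \<longrightarrow> x i = 0)}"

definition ordered_by :: "nat \<Rightarrow> (nat \<Rightarrow> nat) \<Rightarrow> (nat \<Rightarrow> real) set" where
  "ordered_by n \<sigma> = {x. \<forall>i j. 1 \<le> i \<longrightarrow> i \<le> j \<longrightarrow> j \<le> n \<longrightarrow> x (\<sigma> i) \<le> x (\<sigma> j)}"

definition comonotonic :: "real set \<Rightarrow> nat \<Rightarrow> (nat \<Rightarrow> real) \<Rightarrow> (nat \<Rightarrow> real) \<Rightarrow> bool" where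
  "comonotonic J n x x' \<longleftrightarrow> (\<exists>\<sigma>. \<sigma> permutes {1..n} \<and>
      x \<in> tuples J n \<inter> ordered_by n \<sigma> \<and> x' \<in> tuples J n \<inter> ordered_by n \<sigma>)"

definition comonotonically_modular :: "real set \<Rightarrow> nat \<Rightarrow> ((nat \<Rightarrow> real) \<Rightarrow> real) \<Rightarrow> bool" where
  "comonotonically_modular J n f \<longleftrightarrow> (\<forall>x x'. comonotonic J n x x' \<longrightarrow>
      f x + f x' = f (\<lambda>i. min (x i) (x' i)) + f (\<lambda>i. max (x i) (x' i)))"

definition comonotonically_separable :: "real set \<Rightarrow> nat \<Rightarrow> ((nat \<Rightarrow> real) \<Rightarrow> real) \<Rightarrow> bool" where
  "comonotonically_separable J n f \<longleftrightarrow> (\<forall>\<sigma>. \<sigma> permutes {1..n} \<longrightarrow>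
      (\<exists>g :: nat \<Rightarrow> real \<Rightarrow> real. \<forall>x \<in> tuples J n \<inter> ordered_by n \<sigma>.
          f x = (\<Sum>i=1..n. g i (x (\<sigma> i)))))"

end

theory Submission
  imports Defs
begin

definition Lset :: "real set \<Rightarrow> nat \<Rightarrow> (nat \<Rightarrow> real) set" where
  "Lset J n = {y. (\<forall>i\<in>{1..n}. y i \<in> J) \<and> (\<forall>i j. 1 \<le> i \<longrightarrow> i \<le> j \<longrightarrow> j \<le> n \<longrightarrow> y i \<le> y j)}"

locale modF =
  fixes J :: "real set" and n :: nat and F :: "(nat \<Rightarrow> real) \<Rightarrow> real"
  assumes modular: "\<And>y y'. y \<in> Lset J n \<Longrightarrow> y' \<in> Lset J n \<Longrightarrow>
      F y + F y' = F (\<lambda>i. min (y i) (y' i)) + F (\<lambda>i. max (y i) (y' i))"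
  and cong: "\<And>y y'. (\<forall>i\<in>{1..n}. y i = y' i) \<Longrightarrow> F y = F y'"
begin

definition A :: "real \<Rightarrow> nat \<Rightarrow> real \<Rightarrow> real" where
  "A c k t = F (\<lambda>i. if i < k then c else t) - F (\<lambda>i. if i \<le> k then c else t)"

definition B :: "real \<Rightarrow> nat \<Rightarrow> real \<Rightarrow> real" where
  "B c k t = F (\<lambda>i. if i \<le> k then t else c) - F (\<lambda>i. if i < k then t else c)"

lemma up:
  assumes c: "c \<in> J" and y: "y \<in> Lset J n" and ge: "\<forall>i\<in>{1..n}. c \<le> y i"
  shows "m \<le> n \<Longrightarrow> F y = F (\<lambda>i. if i \<le> m then c else y i) + (\<Sum>k=1..m. A c k (y k))"
proof (induction m)
  case 0
  have "F y = F (\<lambda>i. if i \<le> 0 then c else y i)" by (rule cong) auto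
  then show ?case by simp
next
  case (Suc m)
  define k where "k = Suc m"
  have k: "1 \<le> k" "k \<le> n" using Suc.prems k_def by auto
  define r where "r = (\<lambda>i::nat. if i < k then c else y k)"
  define s where "s = (\<lambda>i::nat. if i \<le> k then c else y i)"
  have yJ: "\<forall>i\<in>{1..n}. y i \<in> J" and ymono: "\<And>i j. 1 \<le> i \<Longrightarrow> i \<le> j \<Longrightarrow> j \<le> n \<Longrightarrow> y i \<le> y j"
    using y unfolding Lset_def by auto
  have ykJ: "y k \<in> J" using yJ k by auto
  have cyk: "c \<le> y k" using ge k by auto
  have r: "r \<in> Lset J n" unfolding Lset_def r_def using c ykJ cyk by auto
  have s: "s \<in> Lset J n" unfolding Lset_def s_def
  proof (intro CollectI conjI allI impI ballI)
    fix i assume "i \<in> {1..n}" then show "(if i \<le> k then c else y i) \<in> J" using c yJ by auto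
  next
    fix i j :: nat assume "1 \<le> i" "i \<le> j" "j \<le> n"
    then show "(if i \<le> k then c else y i) \<le> (if j \<le> k then c else y j)"
      using ge ymono by auto
  qed
  have mx: "F (\<lambda>i. max (r i) (s i)) = F (\<lambda>i. if i \<le> m then c else y i)"
  proof (rule cong, intro ballI)
    fix i assume i: "i \<in> {1..n}"
    consider "i < k" | "i = k" | "k < i" by linarith
    then show "max (r i) (s i) = (if i \<le> m then c else y i)"
    proof cases
      case 1 then show ?thesis unfolding r_def s_def k_def by simp
    next
      case 2 then show ?thesis unfolding r_def s_def k_def using cyk k_def by simp
    next
      case 3 then have "y k \<le> y i" using ymono[of k i] k i by auto
      then show ?thesis using 3 unfolding r_def s_def k_def by simp
    qed
  qed
  have mn: "F (\<lambda>i. min (r i) (s i)) = F (\<lambda>i. if i \<le> k then c else y k)"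
    apply (rule cong)
    using ymono[of k] k cyk unfolding r_def s_def k_def by (auto simp: min_def)
  have "F r + F s = F (\<lambda>i. min (r i) (s i)) + F (\<lambda>i. max (r i) (s i))"
    using modular[OF r s] .
  then have "F (\<lambda>i. if i \<le> m then c else y i) = F s + A c k (y k)"
    using mx mn unfolding A_def r_def by simp
  then show ?case using Suc k_def s_def by simp
qed

lemma down:
  assumes c: "c \<in> J" and y: "y \<in> Lset J n" and le: "\<forall>i\<in>{1..n}. y i \<le> c"
  shows "m \<le> n \<Longrightarrow> F (\<lambda>i. if i \<le> m then y i else c) = F (\<lambda>_. c) + (\<Sum>k=1..m. B c k (y k))"
proof (induction m)
  case 0
  have "F (\<lambda>i. if i \<le> 0 then y i else c) = F (\<lambda>_. c)" by (rule cong) auto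
  then show ?case by simp
next
  case (Suc m)
  define k where "k = Suc m"
  have k: "1 \<le> k" "k \<le> n" using Suc.prems k_def by auto
  define r where "r = (\<lambda>i::nat. if i \<le> k then y k else c)"
  define s where "s = (\<lambda>i::nat. if i < k then y i else c)"
  have yJ: "\<forall>i\<in>{1..n}. y i \<in> J" and ymono: "\<And>i j. 1 \<le> i \<Longrightarrow> i \<le> j \<Longrightarrow> j \<le> n \<Longrightarrow> y i \<le> y j"
    using y unfolding Lset_def by auto
  have ykJ: "y k \<in> J" using yJ k by auto
  have cyk: "y k \<le> c" using le k by auto
  have r: "r \<in> Lset J n" unfolding Lset_def r_def using c ykJ cyk by auto
  have s: "s \<in> Lset J n" unfolding Lset_def s_def
  proof (intro CollectI conjI allI impI ballI)
    fix i assume "i \<in> {1..n}" then show "(if i < k then y i else c) \<in> J" using c yJ by auto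
  next
    fix i j :: nat assume "1 \<le> i" "i \<le> j" "j \<le> n"
    then show "(if i < k then y i else c) \<le> (if j < k then y j else c)"
      using le ymono by auto
  qed
  have mn: "F (\<lambda>i. min (r i) (s i)) = F (\<lambda>i. if i \<le> k then y i else c)"
  proof (rule cong, intro ballI)
    fix i assume i: "i \<in> {1..n}"
    consider "i < k" | "i = k" | "k < i" by linarith
    then show "min (r i) (s i) = (if i \<le> k then y i else c)"
    proof cases
      case 1 then have "y i \<le> y k" using ymono[of i k] k i by auto
      then show ?thesis using 1 unfolding r_def s_def by simp
    next
      case 2 then show ?thesis unfolding r_def s_def using cyk by simp
    next
      case 3 then show ?thesis unfolding r_def s_def by simp
    qed
  qed
  have mx: "F (\<lambda>i. max (r i) (s i)) = F (\<lambda>i. if i < k then y k else c)"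
  proof (rule cong, intro ballI)
    fix i assume i: "i \<in> {1..n}"
    consider "i < k" | "i = k" | "k < i" by linarith
    then show "max (r i) (s i) = (if i < k then y k else c)"
    proof cases
      case 1 then have "y i \<le> y k" using ymono[of i k] k i by auto
      then show ?thesis using 1 unfolding r_def s_def by simp
    next
      case 2 then show ?thesis unfolding r_def s_def using cyk by simp
    next
      case 3 then show ?thesis unfolding r_def s_def by simp
    qed
  qed
  have "F r + F s = F (\<lambda>i. min (r i) (s i)) + F (\<lambda>i. max (r i) (s i))"
    using modular[OF r s] .
  then have "F (\<lambda>i. if i \<le> k then y i else c) = F s + B c k (y k)"
    using mx mn unfolding B_def r_def by simp
  moreover have "s = (\<lambda>i. if i \<le> m then y i else c)" unfolding s_def k_def by auto
  ultimately show ?case using Suc k_def by simp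
qed

lemma separable:
  assumes n: "n \<ge> 1" and c: "c \<in> J"
  shows "\<exists>g. \<forall>y\<in>Lset J n. F y = (\<Sum>i=1..n. g i (y i))"
proof -
  define g where "g = (\<lambda>k t. A c k (max t c) + B c k (min t c) + (if k = 1 then F (\<lambda>_. c) else 0))"
  have "F y = (\<Sum>i=1..n. g i (y i))" if y: "y \<in> Lset J n" for y
  proof -
    have yJ: "\<forall>i\<in>{1..n}. y i \<in> J" and ymono: "\<And>i j. 1 \<le> i \<Longrightarrow> i \<le> j \<Longrightarrow> j \<le> n \<Longrightarrow> y i \<le> y j"
      using y unfolding Lset_def by auto
    define P where "P = (\<lambda>i. min (y i) ((\<lambda>_. c) i))"
    define Q where "Q = (\<lambda>i. max (y i) ((\<lambda>_. c) i))"
    have cL: "(\<lambda>_. c) \<in> Lset J n" using c unfolding Lset_def by auto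
    have P: "P \<in> Lset J n" unfolding P_def Lset_def
    proof (intro CollectI conjI allI impI ballI)
      fix i assume "i \<in> {1..n}" then show "min (y i) c \<in> J" using yJ c by (simp add: min_def)
    next
      fix i j :: nat assume "1 \<le> i" "i \<le> j" "j \<le> n"
      then have "y i \<le> y j" by (rule ymono)
      then show "min (y i) c \<le> min (y j) c" by (simp add: min_def)
    qed
    have Q: "Q \<in> Lset J n" unfolding Q_def Lset_def
    proof (intro CollectI conjI allI impI ballI)
      fix i assume "i \<in> {1..n}" then show "max (y i) c \<in> J" using yJ c by (simp add: max_def)
    next
      fix i j :: nat assume "1 \<le> i" "i \<le> j" "j \<le> n"
      then have "y i \<le> y j" by (rule ymono)
      then show "max (y i) c \<le> max (y j) c" by (simp add: max_def)
    qed
    have m: "F y + F (\<lambda>_. c) = F P + F Q" unfolding P_def Q_def using modular[OF y cL] .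
    have FQ: "F Q = F (\<lambda>_. c) + (\<Sum>k=1..n. A c k (Q k))"
    proof -
      have "F Q = F (\<lambda>i. if i \<le> n then c else Q i) + (\<Sum>k=1..n. A c k (Q k))"
        using up[OF c Q _ order_refl] unfolding Q_def by auto
      moreover have "F (\<lambda>i. if i \<le> n then c else Q i) = F (\<lambda>_. c)" by (rule cong) auto
      ultimately show ?thesis by simp
    qed
    have FP: "F P = F (\<lambda>_. c) + (\<Sum>k=1..n. B c k (P k))"
    proof -
      have "F (\<lambda>i. if i \<le> n then P i else c) = F (\<lambda>_. c) + (\<Sum>k=1..n. B c k (P k))"
        using down[OF c P _ order_refl] unfolding P_def by auto
      moreover have "F (\<lambda>i. if i \<le> n then P i else c) = F P" by (rule cong) auto
      ultimately show ?thesis by simp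
    qed
    have c1: "(\<Sum>i=1..n. (if i = 1 then F (\<lambda>_. c) else 0)) = F (\<lambda>_. c)"
      using n by (simp add: sum.delta)
    have "(\<Sum>i=1..n. g i (y i)) = (\<Sum>k=1..n. A c k (Q k)) + (\<Sum>k=1..n. B c k (P k)) + F (\<lambda>_. c)"
      unfolding g_def P_def Q_def sum.distrib c1 by simp
    then show ?thesis using m FP FQ by simp
  qed
  then show ?thesis by blast
qed

end

lemma emb_props:
  assumes sg: "\<sigma> permutes {1..n}"
  defines "emb \<equiv> (\<lambda>y j. if j \<in> {1..n} then y (inv \<sigma> j) else (0::real))"
  shows "y \<in> Lset J n \<Longrightarrow> emb y \<in> tuples J n \<inter> ordered_by n \<sigma>"
    and "i \<in> {1..n} \<Longrightarrow> emb y (\<sigma> i) = y i"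
proof -
  show e: "emb y (\<sigma> i) = y i" if "i \<in> {1..n}" for y i
  proof -
    have "\<sigma> i \<in> {1..n}" using permutes_in_image[OF sg] that by blast
    then show ?thesis unfolding emb_def using sg by (simp add: permutes_inverses(2))
  qed
  assume y: "y \<in> Lset J n"
  have "emb y \<in> tuples J n" unfolding tuples_def emb_def
    using y sg permutes_in_image[OF permutes_inv[OF sg]] unfolding Lset_def by auto
  moreover have "emb y \<in> ordered_by n \<sigma>" unfolding ordered_by_def
  proof (intro CollectI allI impI)
    fix i j assume "1 \<le> i" "i \<le> j" "j \<le> n"
    then show "emb y (\<sigma> i) \<le> emb y (\<sigma> j)" using e[of i y] e[of j y] y unfolding Lset_def by auto
  qed
  ultimately show "emb y \<in> tuples J n \<inter> ordered_by n \<sigma>" by simp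
qed

lemma mod_to_sep:
  assumes n: "n \<ge> 1" and J: "J \<noteq> {}" and M: "comonotonically_modular J n f"
  shows "comonotonically_separable J n f"
  unfolding comonotonically_separable_def
proof (intro allI impI)
  fix \<sigma> assume sg: "\<sigma> permutes {1..n}"
  define emb where "emb = (\<lambda>y j. if j \<in> {1..n} then y (inv \<sigma> j) else (0::real))"
  define F where "F = (\<lambda>y. f (emb y))"
  have EP: "\<And>y. y \<in> Lset J n \<Longrightarrow> emb y \<in> tuples J n \<inter> ordered_by n \<sigma>"
    using emb_props(1)[OF sg] unfolding emb_def by blast
  have EI: "\<And>y i. i \<in> {1..n} \<Longrightarrow> emb y (\<sigma> i) = y i"
    using emb_props(2)[OF sg] unfolding emb_def by blast
  have invin: "\<And>j. j \<in> {1..n} \<Longrightarrow> inv \<sigma> j \<in> {1..n}"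
    using permutes_in_image[OF permutes_inv[OF sg]] by blast
  interpret modF J n F
  proof
    fix y y' assume y: "y \<in> Lset J n" and y': "y' \<in> Lset J n"
    have "comonotonic J n (emb y) (emb y')" unfolding comonotonic_def using sg EP[OF y] EP[OF y'] by blast
    then have "f (emb y) + f (emb y') = f (\<lambda>i. min (emb y i) (emb y' i)) + f (\<lambda>i. max (emb y i) (emb y' i))"
      using M unfolding comonotonically_modular_def by blast
    moreover have "(\<lambda>i. min (emb y i) (emb y' i)) = emb (\<lambda>i. min (y i) (y' i))"
      unfolding emb_def by auto
    moreover have "(\<lambda>i. max (emb y i) (emb y' i)) = emb (\<lambda>i. max (y i) (y' i))"
      unfolding emb_def by auto
    ultimately show "F y + F y' = F (\<lambda>i. min (y i) (y' i)) + F (\<lambda>i. max (y i) (y' i))"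
      unfolding F_def by simp
  next
    fix y y' :: "nat \<Rightarrow> real" assume "\<forall>i\<in>{1..n}. y i = y' i"
    then have "emb y = emb y'" unfolding emb_def using invin by auto
    then show "F y = F y'" unfolding F_def by simp
  qed
  obtain c where c: "c \<in> J" using J by blast
  obtain g where g: "\<forall>y\<in>Lset J n. F y = (\<Sum>i=1..n. g i (y i))" using separable[OF n c] by blast
  show "\<exists>g. \<forall>x\<in>tuples J n \<inter> ordered_by n \<sigma>. f x = (\<Sum>i=1..n. g i (x (\<sigma> i)))"
  proof (intro exI ballI)
    fix x assume x: "x \<in> tuples J n \<inter> ordered_by n \<sigma>"
    define y where "y = (\<lambda>i. x (\<sigma> i))"
    have yL: "y \<in> Lset J n" unfolding Lset_def y_def using x sg permutes_in_image[OF sg]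
      unfolding tuples_def ordered_by_def by auto
    have "emb y = x" unfolding emb_def y_def using x sg
      unfolding tuples_def by (auto simp: permutes_inverses(1))
    then have "f x = F y" unfolding F_def by simp
    then show "f x = (\<Sum>i=1..n. g i (x (\<sigma> i)))" using g yL unfolding y_def by simp
  qed
qed

lemma sep_to_mod:
  assumes S: "comonotonically_separable J n f"
  shows "comonotonically_modular J n f"
  unfolding comonotonically_modular_def
proof (intro allI impI)
  fix x x' assume "comonotonic J n x x'"
  then obtain \<sigma> where sg: "\<sigma> permutes {1..n}" and x: "x \<in> tuples J n \<inter> ordered_by n \<sigma>"
    and x': "x' \<in> tuples J n \<inter> ordered_by n \<sigma>" unfolding comonotonic_def by blast
  obtain g where g: "\<forall>x \<in> tuples J n \<inter> ordered_by n \<sigma>. f x = (\<Sum>i=1..n. g i (x (\<sigma> i)))"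
    using S sg unfolding comonotonically_separable_def by blast
  have o1: "x (\<sigma> i) \<le> x (\<sigma> j)" "x' (\<sigma> i) \<le> x' (\<sigma> j)" if "1 \<le> i" "i \<le> j" "j \<le> n" for i j
    using x x' that unfolding ordered_by_def by auto
  have mn: "(\<lambda>i. min (x i) (x' i)) \<in> tuples J n \<inter> ordered_by n \<sigma>"
  proof
    show "(\<lambda>i. min (x i) (x' i)) \<in> tuples J n" using x x' unfolding tuples_def by (auto simp: min_def)
    show "(\<lambda>i. min (x i) (x' i)) \<in> ordered_by n \<sigma>" unfolding ordered_by_def
      using min.mono[OF o1] by blast
  qed
  have mx: "(\<lambda>i. max (x i) (x' i)) \<in> tuples J n \<inter> ordered_by n \<sigma>"
  proof
    show "(\<lambda>i. max (x i) (x' i)) \<in> tuples J n" using x x' unfolding tuples_def by (auto simp: max_def)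
    show "(\<lambda>i. max (x i) (x' i)) \<in> ordered_by n \<sigma>" unfolding ordered_by_def
      using max.mono[OF o1] by blast
  qed
  have t: "g i a + g i b = g i (min a b) + g i (max a b)" for i a b
    by (cases "a \<le> b") (auto simp: min_def max_def)
  have "f x + f x' = (\<Sum>i=1..n. g i (x (\<sigma> i)) + g i (x' (\<sigma> i)))"
    using g x x' by (simp add: sum.distrib)
  also have "\<dots> = (\<Sum>i=1..n. g i (min (x (\<sigma> i)) (x' (\<sigma> i))) + g i (max (x (\<sigma> i)) (x' (\<sigma> i))))"
    using t by simp
  also have "\<dots> = f (\<lambda>i. min (x i) (x' i)) + f (\<lambda>i. max (x i) (x' i))"
    using g mn mx by (simp add: sum.distrib)
  finally show "f x + f x' = f (\<lambda>i. min (x i) (x' i)) + f (\<lambda>i. max (x i) (x' i))" .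
qed

theorem corollary13:
  fixes J :: "real set" and n :: nat and f :: "(nat \<Rightarrow> real) \<Rightarrow> real"
  assumes "n \<ge> 1" and "is_interval J" and "J \<noteq> {}"
  shows "comonotonically_modular J n f \<longleftrightarrow> comonotonically_separable J n f"
  using mod_to_sep[OF assms(1,3)] sep_to_mod by blast

end
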